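(* Let $\beta>0$, let $u_0,k$ be real, let $f(u)=(u-u_0)(k-u)$, and let $\Phi(u)=\beta\left(-\frac{u^4}{4}+\frac{k+u_0}{3}u^3-\frac{ku_0}{2}u^2\right)$. Let $\delta$ be the involution defined in the context and put $w=\delta(u)$. Then: (a) $uf(u)+wf(w)<0$ in the case $0<u_0<k<2u_0$ (for all $u\in(u_0,k)$) and in the case $k>0$, $u_0<-k$ (for all $u\in(0,k)$); (b) $uf(u)+wf(w)>0$ in the case $k>0$, $-k<u_0<0$ (for all $u\in(0,u_1)$).
   Context: The involution $\delta$ is defined by $\Phi(\delta(u))=\Phi(u)$ with $\delta(u)$ on the other side of the relevant center, as follows. Case $0<u_0<k<2u_0$: let $w_1$ be the unique point of $(0,u_0)$ with $\Phi(w_1)=\Phi(k)$; for $u\in(u_0,k)$, $\delta(u)$ is the unique $w\in(w_1,u_0)$ with $\Phi(w)=\Phi(u)$. Case $k>0$, $-k<u_0<0$: let $u_1$ be the unique point of $(0,k)$ with $\Phi(u_1)=\Phi(u_0)$; for $u\in(0,u_1)$, $\delta(u)$ is the unique $w\in(u_0,0)$ with $\Phi(w)=\Phi(u)$. Case $k>0$, $u_0<-k$: let $w_2$ be the unique point of $(u_0,0)$ with $\Phi(w_2)=\Phi(k)$; for $u\in(0,k)$, $\delta(u)$ is the unique $w\in(w_2,0)$ with $\Phi(w)=\Phi(u)$. *)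

theory Defs
  imports Complex_Main
begin

definition fpoly :: "real \<Rightarrow> real \<Rightarrow> real \<Rightarrow> real" where
  "fpoly u0 k u = (u - u0) * (k - u)"

definition Phi :: "real \<Rightarrow> real \<Rightarrow> real \<Rightarrow> real \<Rightarrow> real" where
  "Phi \<beta> u0 k u = \<beta> * (- (u ^ 4) / 4 + (k + u0) / 3 * u ^ 3 - k * u0 / 2 * u ^ 2)"

definition w1pt :: "real \<Rightarrow> real \<Rightarrow> real \<Rightarrow> real" where
  "w1pt \<beta> u0 k = (THE w. 0 < w \<and> w < u0 \<and> Phi \<beta> u0 k w = Phi \<beta> u0 k k)"

definition u1pt :: "real \<Rightarrow> real \<Rightarrow> real \<Rightarrow> real" where
  "u1pt \<beta> u0 k = (THE v. 0 < v \<and> v < k \<and> Phi \<beta> u0 k v = Phi \<beta> u0 k u0)"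

definition w2pt :: "real \<Rightarrow> real \<Rightarrow> real \<Rightarrow> real" where
  "w2pt \<beta> u0 k = (THE w. u0 < w \<and> w < 0 \<and> Phi \<beta> u0 k w = Phi \<beta> u0 k k)"

definition delta :: "real \<Rightarrow> real \<Rightarrow> real \<Rightarrow> real \<Rightarrow> real" where
  "delta \<beta> u0 k u =
    (if 0 < u0 \<and> u0 < k \<and> k < 2 * u0 then
       (THE w. w1pt \<beta> u0 k < w \<and> w < u0 \<and> Phi \<beta> u0 k w = Phi \<beta> u0 k u)
     else if 0 < k \<and> - k < u0 \<and> u0 < 0 then
       (THE w. u0 < w \<and> w < 0 \<and> Phi \<beta> u0 k w = Phi \<beta> u0 k u)
     else if 0 < k \<and> u0 < - k then
       (THE w. w2pt \<beta> u0 k < w \<and> w < 0 \<and> Phi \<beta> u0 k w = Phi \<beta> u0 k u)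
     else undefined)"

end

theory Submission
  imports Defs
begin

lemma Phi_deriv: "(Phi b u0 k has_real_derivative b * (x * fpoly u0 k x)) (at x)"
  unfolding Phi_def fpoly_def
  by (auto intro!: derivative_eq_intros simp: algebra_simps power2_eq_square power3_eq_cube)

lemma Phi_cont: "isCont (Phi b u0 k) x"
  using Phi_deriv DERIV_isCont by blast

lemma Phi_conton: "continuous_on S (Phi b u0 k)"
  by (meson Phi_cont continuous_at_imp_continuous_on)

lemma Phi_dec:
  assumes "b > 0" "\<And>t. a < t \<Longrightarrow> t < c \<Longrightarrow> t * fpoly u0 k t < 0"
    and "a \<le> x" "x < y" "y \<le> c"
  shows "Phi b u0 k y < Phi b u0 k x"
proof (rule DERIV_neg_imp_decreasing_open[OF \<open>x<y\<close>])
  fix t assume "x < t" "t < y"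
  then show "\<exists>d. DERIV (Phi b u0 k) t :> d \<and> d < 0"
    using Phi_deriv assms by (meson dual_order.strict_trans1 dual_order.strict_trans2 mult_pos_neg)
qed (rule Phi_conton)

lemma Phi_inc:
  assumes "b > 0" "\<And>t. a < t \<Longrightarrow> t < c \<Longrightarrow> t * fpoly u0 k t > 0"
    and "a \<le> x" "x < y" "y \<le> c"
  shows "Phi b u0 k x < Phi b u0 k y"
proof (rule DERIV_pos_imp_increasing_open[OF \<open>x<y\<close>])
  fix t assume "x < t" "t < y"
  then show "\<exists>d. DERIV (Phi b u0 k) t :> d \<and> d > 0"
    using Phi_deriv assms by (meson dual_order.strict_trans1 dual_order.strict_trans2 mult_pos_pos)
qed (rule Phi_conton)

lemma key:
  assumes "b \<noteq> 0" "u \<noteq> w" "Phi b u0 k u = Phi b u0 k w"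
  shows "2 * (u * fpoly u0 k u + w * fpoly u0 k w) = (u+w)*(u+w-2*k)*(u+w-2*u0)"
proof -
  have "b * (u - w) * (2 * (u * fpoly u0 k u + w * fpoly u0 k w) - (u+w)*(u+w-2*k)*(u+w-2*u0))
     = 12 * (Phi b u0 k u - Phi b u0 k w)"
    unfolding Phi_def fpoly_def by (simp add: field_simps power2_eq_square power3_eq_cube power4_eq_xxxx)
  then show ?thesis using assms by simp
qed

lemma refl1: "Phi b u0 k u - Phi b u0 k (2*u0-u) = -(2/3)*b*(2*u0-k)*(u-u0)^3"
  unfolding Phi_def by (simp add: field_simps power2_eq_square power3_eq_cube power4_eq_xxxx)

lemma refl0: "Phi b u0 k u - Phi b u0 k (-u) = (2/3)*b*(k+u0)*u^3"
  unfolding Phi_def by (simp add: field_simps power2_eq_square power3_eq_cube power4_eq_xxxx)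

lemma Phik: "Phi b u0 k k = b * k^3*(k-2*u0)/12"
  unfolding Phi_def by (simp add: field_simps power2_eq_square power3_eq_cube power4_eq_xxxx)

lemma Phiu0: "Phi b u0 k u0 = b * u0^3*(u0-2*k)/12"
  unfolding Phi_def by (simp add: field_simps power2_eq_square power3_eq_cube power4_eq_xxxx)

lemma inj_dec:
  fixes g :: "real \<Rightarrow> real"
  assumes "\<And>x y. a\<le>x \<Longrightarrow> x<y \<Longrightarrow> y\<le>c \<Longrightarrow> g y < g x"
    "a\<le>x" "x\<le>c" "a\<le>y" "y\<le>c" "g x = g y"
  shows "x = y"
proof (rule ccontr)
  assume "x \<noteq> y"
  then consider "x < y" | "y < x" by linarith
  then show False using assms by cases (metis less_irrefl)+
qed

lemma case1:
  assumes b: "b > 0" and h: "0 < u0" "u0 < k" "k < 2*u0" "u0 < u" "u < k"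
  shows "u * fpoly u0 k u + delta b u0 k u * fpoly u0 k (delta b u0 k u) < 0"
proof -
  let ?P = "Phi b u0 k"
  have s1: "t * fpoly u0 k t < 0" if "0 < t" "t < u0" for t
    unfolding fpoly_def using that h by (intro mult_pos_neg mult_neg_pos) auto
  have s2: "t * fpoly u0 k t > 0" if "u0 < t" "t < k" for t
    unfolding fpoly_def using that h by (intro mult_pos_pos) auto
  have dec: "?P y < ?P x" if "0 \<le> x" "x < y" "y \<le> u0" for x y
    by (rule Phi_dec[OF b s1 that])
  have inc: "?P x < ?P y" if "u0 \<le> x" "x < y" "y \<le> k" for x y
    by (rule Phi_inc[OF b s2 that])
  have P0: "?P 0 = 0" by (simp add: Phi_def)
  have Pk: "?P k < 0" unfolding Phik using b h
    by (intro divide_neg_pos mult_pos_neg mult_pos_pos) auto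
  have Pu0k: "?P u0 < ?P k" using inc[of u0 k] h by auto
  obtain w1 where w1: "0 \<le> w1" "w1 \<le> u0" "?P w1 = ?P k"
    using IVT2[of ?P u0 "?P k" 0] Pk Pu0k P0 h Phi_cont by fastforce
  have w1s: "0 < w1" "w1 < u0" using w1 Pk Pu0k P0
    by (metis less_irrefl order_le_less)+
  have w1pt: "w1pt b u0 k = w1"
    unfolding w1pt_def
  proof (rule the_equality)
    show "0 < w1 \<and> w1 < u0 \<and> ?P w1 = ?P k" using w1s w1 by auto
  next
    fix w assume "0 < w \<and> w < u0 \<and> ?P w = ?P k"
    then show "w = w1" using inj_dec[of 0 u0 ?P w w1, OF dec] w1 by auto
  qed
  have Pu: "?P u0 < ?P u" "?P u < ?P k" using inc h by auto
  obtain w where w: "w1 \<le> w" "w \<le> u0" "?P w = ?P u"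
    using IVT2[of ?P u0 "?P u" w1] Pu w1 w1s Phi_cont by fastforce
  have ws: "w1 < w" "w < u0" using w Pu w1
    by (metis less_irrefl order_le_less)+
  have dl: "delta b u0 k u = w"
    unfolding delta_def w1pt using h
  proof (simp, intro the_equality)
    show "w1 < w \<and> w < u0 \<and> ?P w = ?P u" using ws w by auto
  next
    fix w' assume "w1 < w' \<and> w' < u0 \<and> ?P w' = ?P u"
    then show "w' = w" using inj_dec[of 0 u0 ?P w' w, OF dec] w w1s by auto
  qed
  define v where "v = 2*u0 - u"
  have vs: "0 < v" "v < u0" using h by (auto simp: v_def)
  have "?P u - ?P v < 0" unfolding v_def refl1 using h b
    by (simp add: mult_pos_pos)
  then have "w > v"
    using dec[of w v] w ws w1s vs by (cases "w = v") force+
  have "2 * (u * fpoly u0 k u + w * fpoly u0 k w) = (u+w)*(u+w-2*k)*(u+w-2*u0)"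
    using key[of b u w u0 k] b w ws h by auto
  also have "\<dots> < 0" using \<open>w > v\<close> v_def h ws w1s
    by (intro mult_pos_neg mult_neg_pos) auto
  finally show ?thesis using dl by simp
qed

lemma Pdiff: "Phi b u0 k u0 - Phi b u0 k k = b/12 * ((u0^2-k^2)*(u0-k)^2)"
  unfolding Phik Phiu0 by (simp add: field_simps power2_eq_square power3_eq_cube power4_eq_xxxx)

lemma case2:
  assumes b: "b > 0" and h: "0 < k" "u0 < -k" "0 < u" "u < k"
  shows "u * fpoly u0 k u + delta b u0 k u * fpoly u0 k (delta b u0 k u) < 0"
proof -
  let ?P = "Phi b u0 k"
  have s1: "t * fpoly u0 k t < 0" if "u0 < t" "t < 0" for t
    unfolding fpoly_def using that h by (intro mult_neg_pos mult_pos_pos) auto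
  have s2: "t * fpoly u0 k t > 0" if "0 < t" "t < k" for t
    unfolding fpoly_def using that h by (intro mult_pos_pos) auto
  have dec: "?P y < ?P x" if "u0 \<le> x" "x < y" "y \<le> 0" for x y
    by (rule Phi_dec[OF b s1 that])
  have inc: "?P x < ?P y" if "0 \<le> x" "x < y" "y \<le> k" for x y
    by (rule Phi_inc[OF b s2 that])
  have P0: "?P 0 = 0" by (simp add: Phi_def)
  have Pk: "?P k > 0" unfolding Phik using b h
    by (intro divide_pos_pos mult_pos_pos) auto
  have "k*k < (-u0)*(-u0)" using h by (intro mult_strict_mono) auto
  then have "u0^2 > k^2" by (simp add: power2_eq_square)
  then have "?P u0 - ?P k > 0" unfolding Pdiff using b h
    by (intro mult_pos_pos) auto
  then have Pu0k: "?P k < ?P u0" by simp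
  obtain w1 where w1: "u0 \<le> w1" "w1 \<le> 0" "?P w1 = ?P k"
    using IVT2[of ?P 0 "?P k" u0] Pk Pu0k P0 h Phi_cont by fastforce
  have w1s: "u0 < w1" "w1 < 0" using w1 Pk Pu0k P0
    by (metis less_irrefl order_le_less)+
  have w1pt: "w2pt b u0 k = w1"
    unfolding w2pt_def
  proof (rule the_equality)
    show "u0 < w1 \<and> w1 < 0 \<and> ?P w1 = ?P k" using w1s w1 by auto
  next
    fix w assume "u0 < w \<and> w < 0 \<and> ?P w = ?P k"
    then show "w = w1" using inj_dec[of u0 0 ?P w w1, OF dec] w1 by auto
  qed
  have Pu: "?P 0 < ?P u" "?P u < ?P k" using inc h by auto
  obtain w where w: "w1 \<le> w" "w \<le> 0" "?P w = ?P u"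
    using IVT2[of ?P 0 "?P u" w1] Pu w1 w1s Phi_cont by fastforce
  have ws: "w1 < w" "w < 0" using w Pu w1
    by (metis less_irrefl order_le_less)+
  have dl: "delta b u0 k u = w"
    unfolding delta_def w1pt using h
  proof (simp, intro the_equality)
    show "w1 < w \<and> w < 0 \<and> ?P w = ?P u" using ws w by auto
  next
    fix w' assume "w1 < w' \<and> w' < 0 \<and> ?P w' = ?P u"
    then show "w' = w" using inj_dec[of u0 0 ?P w' w, OF dec] w w1s by auto
  qed
  define v where "v = - u"
  have vs: "u0 < v" "v < 0" using h by (auto simp: v_def)
  have "?P u - ?P v < 0" unfolding v_def refl0 using h b
    by (intro mult_neg_pos mult_pos_neg) auto
  then have "w > v"
    using dec[of w v] w ws w1s vs by (cases "w = v") force+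
  have "2 * (u * fpoly u0 k u + w * fpoly u0 k w) = (u+w)*(u+w-2*k)*(u+w-2*u0)"
    using key[of b u w u0 k] b w ws h by auto
  also have "\<dots> < 0" using \<open>w > v\<close> v_def h ws w1s
    by (intro mult_pos_neg mult_neg_pos) auto
  finally show ?thesis using dl by simp
qed

lemma case3:
  assumes b: "b > 0" and h: "0 < k" "-k < u0" "u0 < 0" "0 < u" "u < u1pt b u0 k"
  shows "u * fpoly u0 k u + delta b u0 k u * fpoly u0 k (delta b u0 k u) > 0"
proof -
  let ?P = "Phi b u0 k"
  have s1: "t * fpoly u0 k t < 0" if "u0 < t" "t < 0" for t
    unfolding fpoly_def using that h by (intro mult_neg_pos mult_pos_pos) auto
  have s2: "t * fpoly u0 k t > 0" if "0 < t" "t < k" for t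
    unfolding fpoly_def using that h by (intro mult_pos_pos) auto
  have dec: "?P y < ?P x" if "u0 \<le> x" "x < y" "y \<le> 0" for x y
    by (rule Phi_dec[OF b s1 that])
  have inc: "?P x < ?P y" if "0 \<le> x" "x < y" "y \<le> k" for x y
    by (rule Phi_inc[OF b s2 that])
  have P0: "?P 0 = 0" by (simp add: Phi_def)
  have "0 < (-u0)*(-u0)*(-u0)" using h by (intro mult_pos_pos) auto
  then have "u0^3 < 0" by (simp add: power3_eq_cube)
  then have Pu0: "?P u0 > 0" unfolding Phiu0 using b h
    by (intro divide_pos_pos mult_neg_neg mult_pos_neg) auto
  have "(-u0)*(-u0) < k*k" using h by (intro mult_strict_mono) auto
  then have "u0^2 < k^2" by (simp add: power2_eq_square)
  then have "?P u0 - ?P k < 0" unfolding Pdiff using b h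
    by (intro mult_pos_neg mult_neg_pos) auto
  then have Pu0k: "?P u0 < ?P k" by simp
  obtain u1 where u1: "0 \<le> u1" "u1 \<le> k" "?P u1 = ?P u0"
    using IVT[of ?P 0 "?P u0" k] Pu0 Pu0k P0 h Phi_cont by fastforce
  have u1s: "0 < u1" "u1 < k" using u1 Pu0 Pu0k P0
    by (metis less_irrefl order_le_less)+
  have inj_inc: "x = y" if "0\<le>x" "x\<le>k" "0\<le>y" "y\<le>k" "?P x = ?P y" for x y
    using inj_dec[of 0 k "\<lambda>t. - ?P t" x y] inc that by auto
  have u1pt: "u1pt b u0 k = u1"
    unfolding u1pt_def
  proof (rule the_equality)
    show "0 < u1 \<and> u1 < k \<and> ?P u1 = ?P u0" using u1s u1 by auto
  next
    fix w assume "0 < w \<and> w < k \<and> ?P w = ?P u0"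
    then show "w = u1" using inj_inc[of w u1] u1 by auto
  qed
  have "b * ((k + u0) * u0 ^ 3) < 0" using b h \<open>u0^3 < 0\<close> by (intro mult_pos_neg) auto
  then have "?P (-u0) - ?P u0 > 0" using refl0[of b u0 k "-u0"] by simp
  then have "u1 < -u0" using inc[of "-u0" u1] u1 u1s h
    by (cases "u1 = -u0") force+
  have uu: "u < u1" using h u1pt by simp
  have Pu: "?P 0 < ?P u" "?P u < ?P u0" using inc[of 0 u] inc[of u u1] uu u1s u1 h by auto
  obtain w where w: "u0 \<le> w" "w \<le> 0" "?P w = ?P u"
    using IVT2[of ?P 0 "?P u" u0] Pu P0 h Phi_cont by fastforce
  have ws: "u0 < w" "w < 0" using w Pu
    by (metis less_irrefl order_le_less)+
  have dl: "delta b u0 k u = w"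
    unfolding delta_def using h
  proof (simp, intro the_equality)
    show "u0 < w \<and> w < 0 \<and> ?P w = ?P u" using ws w by auto
  next
    fix w' assume "u0 < w' \<and> w' < 0 \<and> ?P w' = ?P u"
    then show "w' = w" using inj_dec[of u0 0 ?P w' w, OF dec] w by auto
  qed
  define v where "v = - u"
  have vs: "u0 < v" "v < 0" using h uu \<open>u1 < -u0\<close> by (auto simp: v_def)
  have "?P u - ?P v > 0" unfolding v_def refl0 using h b
    by (intro mult_pos_pos) auto
  then have "w < v"
    using dec[of v w] w ws vs by (cases "w = v") force+
  have "2 * (u * fpoly u0 k u + w * fpoly u0 k w) = (u+w)*(u+w-2*k)*(u+w-2*u0)"
    using key[of b u w u0 k] b w ws h by auto
  also have "\<dots> > 0" using \<open>w < v\<close> v_def h ws uu u1s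
    by (intro mult_pos_pos mult_neg_neg) auto
  finally show ?thesis using dl by simp
qed

theorem lemma3p3:
  fixes \<beta> u0 k :: real
  assumes "\<beta> > 0"
  shows "(0 < u0 \<and> u0 < k \<and> k < 2 * u0 \<longrightarrow>
            (\<forall>u. u0 < u \<and> u < k \<longrightarrow>
               u * fpoly u0 k u + delta \<beta> u0 k u * fpoly u0 k (delta \<beta> u0 k u) < 0))
       \<and> (0 < k \<and> u0 < - k \<longrightarrow>
            (\<forall>u. 0 < u \<and> u < k \<longrightarrow>
               u * fpoly u0 k u + delta \<beta> u0 k u * fpoly u0 k (delta \<beta> u0 k u) < 0))
       \<and> (0 < k \<and> - k < u0 \<and> u0 < 0 \<longrightarrow>
            (\<forall>u. 0 < u \<and> u < u1pt \<beta> u0 k \<longrightarrow>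
               u * fpoly u0 k u + delta \<beta> u0 k u * fpoly u0 k (delta \<beta> u0 k u) > 0))"
  using case1[OF assms] case2[OF assms] case3[OF assms] by blast

end
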